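(* Let $n\ge0$ and, for $0\le k\le n$, let $\mathbf b^{(k)}\in\mathbb R^{n+1}$ be given by $\mathbf b^{(k)}_i=\binom{k}{i}$. Define $$\mathbf v^{\pm}_{(k)}=2^{\frac{n-k}{2}}\,\mathbf b^{(k)}\pm2^{\frac k2}\,\mathbf b^{(n-k)}.$$ Then $K^{(n)}\mathbf v^{\pm}_{(k)}=\pm2^{n/2}\,\mathbf v^{\pm}_{(k)}$ for every $k$. Moreover, the vectors $\mathbf v^{+}_{(k)}$ for $0\le k\le n/2$ together with $\mathbf v^{-}_{(k)}$ for $0\le k<n/2$ form a basis of $\mathbb R^{n+1}$; hence $K^{(n)}$ is diagonalizable with eigenvalue $2^{n/2}$ of multiplicity $\lfloor n/2\rfloor+1$ and eigenvalue $-2^{n/2}$ of multiplicity $\lceil n/2\rceil$.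
   Context: For an integer $n\ge 0$, the $n$-th Krawtchouk matrix $K^{(n)}$ is the $(n+1)\times(n+1)$ integer matrix with rows and columns indexed by $0,1,\dots,n$, whose entries are defined by $(1+t)^{n-q}(1-t)^q=\sum_{p=0}^n K^{(n)}_{pq}\,t^p$. *)

theory Defs
  imports "Jordan_Normal_Form.Jordan_Normal_Form_Uniqueness" "Jordan_Normal_Form.VS_Connect"
begin

definition krawtchouk :: "nat \<Rightarrow> int mat" where
  "krawtchouk n = mat (n+1) (n+1)
     (\<lambda>(p,q). coeff ([:1, 1:] ^ (n - q) * [:1, -1:] ^ q) p)"

definition krawtchouk_real :: "nat \<Rightarrow> real mat" where
  "krawtchouk_real n = map_mat real_of_int (krawtchouk n)"

definition bvec :: "nat \<Rightarrow> nat \<Rightarrow> real vec" where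
  "bvec n k = vec (n+1) (\<lambda>i. real (k choose i))"

definition vplus :: "nat \<Rightarrow> nat \<Rightarrow> real vec" where
  "vplus n k = (2 powr ((real n - real k) / 2)) \<cdot>\<^sub>v bvec n k
              + (2 powr (real k / 2)) \<cdot>\<^sub>v bvec n (n - k)"

definition vminus :: "nat \<Rightarrow> nat \<Rightarrow> real vec" where
  "vminus n k = (2 powr ((real n - real k) / 2)) \<cdot>\<^sub>v bvec n k
              - (2 powr (real k / 2)) \<cdot>\<^sub>v bvec n (n - k)"

end

theory Submission imports Defs begin

lemma int_sum_poly:
  assumes "k \<le> n"
  shows "(\<Sum>q<n+1. Polynomial.smult (of_nat (k choose q)) (([:1,1:]::int poly)^(n-q) * ([:1,-1:]::int poly)^q)) = Polynomial.smult ((2::int)^k) (([:1,1:] :: int poly)^(n-k))"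
proof -
  have "(\<Sum>q<n+1. Polynomial.smult (of_nat (k choose q)) ([:1,1:]^(n-q) * [:1,-1::int:]^q))
       = (\<Sum>q\<le>k. Polynomial.smult (of_nat (k choose q)) ([:1,1:]^(n-q) * [:1,-1::int:]^q))"
    by (rule sum.mono_neutral_right) (use assms in auto)
  also have "\<dots> = (\<Sum>q\<le>k. [:1,1:]^(n-k) * (of_nat (k choose q) * [:1,-1::int:]^q * [:1,1:]^(k-q)))"
  proof (rule sum.cong[OF refl])
    fix q assume "q \<in> {..k}"
    hence "n - q = (n-k) + (k-q)" using assms by auto
    thus "Polynomial.smult (of_nat (k choose q)) ([:1,1:]^(n-q) * [:1,-1::int:]^q) = [:1,1:]^(n-k) * (of_nat (k choose q) * [:1,-1::int:]^q * [:1,1:]^(k-q))"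
      by (simp add: power_add algebra_simps of_nat_poly)
  qed
  also have "\<dots> = [:1,1:]^(n-k) * ([:1,-1::int:] + [:1,1:])^k"
    by (simp only: binomial_ring[of "[:1,-1::int:]" "[:1,1:]" k] sum_distrib_left)
  also have "[:1,-1::int:] + [:1,1:] = [:2:]" by simp
  also have "[:2::int:]^k = [:2^k:]" by (induct k) (auto simp: algebra_simps)
  finally show ?thesis by (simp add: mult.commute)
qed

lemma coeff_11: "coeff ([:1,1::int:]^m) p = int (m choose p)"
proof (cases "p \<le> m")
  case True thus ?thesis using coeff_linear_poly_power[OF True, of 1 1] by simp
next
  case False
  have "degree ([:1,1::int:]^m) \<le> m"
    using degree_power_le[of "[:1,1::int:]" m] by simp
  thus ?thesis using False by (simp add: coeff_eq_0)
qed

lemma K_bvec: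
  assumes "k \<le> n"
  shows "krawtchouk_real n *\<^sub>v bvec n k = (2^k) \<cdot>\<^sub>v bvec n (n-k)"
proof (rule eq_vecI)
  show "dim_vec (krawtchouk_real n *\<^sub>v bvec n k) = dim_vec ((2^k) \<cdot>\<^sub>v bvec n (n-k))"
    by (simp add: krawtchouk_real_def krawtchouk_def bvec_def)
  fix i assume "i < dim_vec ((2^k) \<cdot>\<^sub>v bvec n (n-k))"
  hence i: "i < n+1" by (simp add: bvec_def)
  have "(krawtchouk_real n *\<^sub>v bvec n k) $ i = (\<Sum>q<n+1. real_of_int (coeff ([:1,1:]^(n-q) * [:1,-1:]^q) i) * real (k choose q))"
    using i by (simp add: krawtchouk_real_def krawtchouk_def bvec_def scalar_prod_def lessThan_atLeast0)
  also have "\<dots> = real_of_int (coeff (\<Sum>q<n+1. Polynomial.smult (of_nat (k choose q)) ([:1,1:]^(n-q) * [:1,-1::int:]^q)) i)"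
    unfolding coeff_sum of_int_sum by (rule sum.cong, auto)
  also have "\<dots> = 2^k * real (n - k choose i)"
    unfolding int_sum_poly[OF assms] by (simp add: coeff_11)
  finally show "(krawtchouk_real n *\<^sub>v bvec n k) $ i = ((2^k) \<cdot>\<^sub>v bvec n (n-k)) $ i"
    using i by (simp add: bvec_def)
qed


definition lam :: "nat \<Rightarrow> real" where "lam n = 2 powr (real n / 2)"

lemma pw1: assumes "k \<le> n"
  shows "2 powr ((real n - real k)/2) * 2^k = lam n * 2 powr (real k / 2)"
proof -
  have "(2::real)^k = 2 powr real k" by (simp add: powr_realpow)
  hence "2 powr ((real n - real k)/2) * 2^k = 2 powr ((real n - real k)/2 + real k)"
    by (simp add: powr_add)
  also have "(real n - real k)/2 + real k = real n / 2 + real k / 2" by (simp add: field_simps)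
  finally show ?thesis by (simp add: powr_add lam_def)
qed

lemma pw2: assumes "k \<le> n"
  shows "2 powr (real k / 2) * 2^(n-k) = lam n * 2 powr ((real n - real k)/2)"
proof -
  have e: "real (n-k) = real n - real k" using assms by simp
  have "(2::real)^(n-k) = 2 powr (real n - real k)" unfolding e[symmetric] by (simp add: powr_realpow)
  hence "2 powr (real k / 2) * 2^(n-k) = 2 powr (real k / 2) * 2 powr (real n - real k)"
    by (simp only:)
  also have "\<dots> = 2 powr (real k / 2 + (real n - real k))"
    by (simp only: powr_add)
  also have "real k / 2 + (real n - real k) = real n / 2 + (real n - real k)/2" by (simp add: field_simps)
  finally show ?thesis by (simp add: powr_add lam_def)
qed

lemma K_carrier: "krawtchouk_real n \<in> carrier_mat (Suc n) (Suc n)"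
  by (simp add: krawtchouk_real_def krawtchouk_def)

lemma bvec_carrier[simp]: "bvec n k \<in> carrier_vec (Suc n)"
  by (simp add: bvec_def)

lemma eig_plus: assumes "k \<le> n"
  shows "krawtchouk_real n *\<^sub>v vplus n k = lam n \<cdot>\<^sub>v vplus n k"
proof -
  have "krawtchouk_real n *\<^sub>v vplus n k =
    (2 powr ((real n - real k) / 2)) \<cdot>\<^sub>v (krawtchouk_real n *\<^sub>v bvec n k)
    + (2 powr (real k / 2)) \<cdot>\<^sub>v (krawtchouk_real n *\<^sub>v bvec n (n - k))"
    unfolding vplus_def
    by (subst mult_add_distrib_mat_vec[OF K_carrier], auto simp: mult_mat_vec[OF K_carrier bvec_carrier])
  also have "\<dots> = lam n \<cdot>\<^sub>v vplus n k"
    unfolding K_bvec[OF assms] K_bvec[of "n-k" n, OF diff_le_self] vplus_def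
    using assms pw1[OF assms] pw2[OF assms]
    by (intro eq_vecI) (auto simp: bvec_def algebra_simps)
  finally show ?thesis .
qed

lemma eig_minus: assumes "k \<le> n"
  shows "krawtchouk_real n *\<^sub>v vminus n k = (- lam n) \<cdot>\<^sub>v vminus n k"
proof -
  have "krawtchouk_real n *\<^sub>v vminus n k =
    (2 powr ((real n - real k) / 2)) \<cdot>\<^sub>v (krawtchouk_real n *\<^sub>v bvec n k)
    - (2 powr (real k / 2)) \<cdot>\<^sub>v (krawtchouk_real n *\<^sub>v bvec n (n - k))"
    unfolding vminus_def
    by (subst mult_minus_distrib_mat_vec[OF K_carrier], auto simp: mult_mat_vec[OF K_carrier bvec_carrier])
  also have "\<dots> = (- lam n) \<cdot>\<^sub>v vminus n k"
    unfolding K_bvec[OF assms] K_bvec[of "n-k" n, OF diff_le_self] vminus_def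
    using assms pw1[OF assms] pw2[OF assms]
    by (intro eq_vecI) (auto simp: bvec_def algebra_simps)
  finally show ?thesis .
qed


definition sg :: "nat \<Rightarrow> nat \<Rightarrow> real" where "sg n k = (if 2*k \<le> n then 1 else -1)"
definition dd :: "nat \<Rightarrow> nat \<Rightarrow> real" where "dd n k = sg n k * lam n"
definition colv :: "nat \<Rightarrow> nat \<Rightarrow> real vec" where
  "colv n k = (if 2*k \<le> n then vplus n k else vminus n (n-k))"
definition Pm :: "nat \<Rightarrow> real mat" where "Pm n = mat (Suc n) (Suc n) (\<lambda>(i,j). colv n j $ i)"
definition Dm :: "nat \<Rightarrow> real mat" where "Dm n = mat (Suc n) (Suc n) (\<lambda>(i,j). if i = j then dd n j else 0)"
definition Bm :: "nat \<Rightarrow> real mat" where "Bm n = mat (Suc n) (Suc n) (\<lambda>(i,r). real (r choose i))"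
definition Tm :: "nat \<Rightarrow> real mat" where "Tm n = mat (Suc n) (Suc n) (\<lambda>(r,k).
   (if r = k then sg n k * 2 powr ((real n - real k)/2) else 0) + (if r = n - k then 2 powr (real k/2) else 0))"

lemma colv_carrier[simp]: "colv n k \<in> carrier_vec (Suc n)"
  by (simp add: colv_def vplus_def vminus_def bvec_def)

lemma dim_colv[simp]: "dim_vec (colv n k) = Suc n"
  by (simp add: colv_def vplus_def vminus_def bvec_def)

lemma colv_index: assumes "k \<le> n" "i < Suc n"
  shows "colv n k $ i = sg n k * 2 powr ((real n - real k)/2) * real (k choose i) + 2 powr (real k/2) * real (n-k choose i)"
proof (cases "2*k \<le> n")
  case True thus ?thesis using assms by (simp add: colv_def sg_def vplus_def bvec_def)
next
  case False
  have e: "real (n-k) = real n - real k" using assms by simp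
  have e2: "n - (n-k) = k" using assms by simp
  show ?thesis using False assms by (simp add: colv_def sg_def vminus_def bvec_def e e2)
qed

lemma Kcol: assumes "k \<le> n"
  shows "krawtchouk_real n *\<^sub>v colv n k = dd n k \<cdot>\<^sub>v colv n k"
proof (cases "2*k \<le> n")
  case True thus ?thesis using eig_plus[OF assms] by (simp add: colv_def dd_def sg_def)
next
  case False thus ?thesis using eig_minus[of "n-k" n] by (simp add: colv_def dd_def sg_def)
qed

lemma Pm_carrier[simp]: "Pm n \<in> carrier_mat (Suc n) (Suc n)" by (simp add: Pm_def)
lemma Dm_carrier[simp]: "Dm n \<in> carrier_mat (Suc n) (Suc n)" by (simp add: Dm_def)
lemma Bm_carrier[simp]: "Bm n \<in> carrier_mat (Suc n) (Suc n)" by (simp add: Bm_def)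
lemma Tm_carrier[simp]: "Tm n \<in> carrier_mat (Suc n) (Suc n)" by (simp add: Tm_def)

lemma dims[simp]: "dim_row (Pm n) = Suc n" "dim_col (Pm n) = Suc n" "dim_row (Dm n) = Suc n" "dim_col (Dm n) = Suc n"
  "dim_row (Bm n) = Suc n" "dim_col (Bm n) = Suc n" "dim_row (Tm n) = Suc n" "dim_col (Tm n) = Suc n"
  by (auto simp: Pm_def Dm_def Bm_def Tm_def)

lemma col_Pm: "j < Suc n \<Longrightarrow> col (Pm n) j = colv n j"
  by (intro eq_vecI) (auto simp: Pm_def)

lemma KP: "krawtchouk_real n * Pm n = Pm n * Dm n"
proof (rule eq_matI)
  fix i j assume i: "i < dim_row (Pm n * Dm n)" and j: "j < dim_col (Pm n * Dm n)"
  hence i: "i < Suc n" and j: "j < Suc n" by auto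
  have "(krawtchouk_real n * Pm n) $$ (i,j) = (krawtchouk_real n *\<^sub>v colv n j) $ i"
    using i j K_carrier[of n] by (simp add: col_Pm)
  also have "\<dots> = dd n j * colv n j $ i" using i j by (simp add: Kcol)
  also have "\<dots> = (Pm n * Dm n) $$ (i,j)"
    using i j by (simp add: Pm_def Dm_def scalar_prod_def if_distrib[of "\<lambda>x. _ * x"] cong: if_cong)
  finally show "(krawtchouk_real n * Pm n) $$ (i,j) = (Pm n * Dm n) $$ (i,j)" .
qed (use K_carrier[of n] in auto)

lemma PBT: "Pm n = Bm n * Tm n"
proof (rule eq_matI)
  fix i j assume i: "i < dim_row (Bm n * Tm n)" and j: "j < dim_col (Bm n * Tm n)"
  hence i: "i < Suc n" and j: "j < Suc n" by auto
  have "(Bm n * Tm n) $$ (i,j) = (\<Sum>r\<in>{0..<Suc n}. real (r choose i) * (if r = j then sg n j * 2 powr ((real n - real j)/2) else 0))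
     + (\<Sum>r\<in>{0..<Suc n}. real (r choose i) * (if r = n - j then 2 powr (real j/2) else 0))"
    using i j by (simp add: Bm_def Tm_def scalar_prod_def distrib_left sum.distrib)
  also have "\<dots> = colv n j $ i"
    using i j by (simp add: colv_index if_distrib[of "\<lambda>x. _ * x"] cong: if_cong)
  finally show "Pm n $$ (i,j) = (Bm n * Tm n) $$ (i,j)" using i j by (simp add: Pm_def)
qed auto

lemma det_Bm: "det (Bm n) = 1"
proof -
  have "upper_triangular (Bm n)" by (auto simp: upper_triangular_def Bm_def)
  hence "det (Bm n) = prod_list (diag_mat (Bm n))" by (rule det_upper_triangular[OF _ Bm_carrier])
  also have "diag_mat (Bm n) = map (\<lambda>_. 1) [0..<Suc n]"
    by (auto simp: diag_mat_def Bm_def intro!: map_cong)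
  also have "prod_list \<dots> = 1" by (induct n) auto
  finally show ?thesis .
qed


lemma Tm_kernel: assumes v: "v \<in> carrier_vec (Suc n)" and T: "Tm n *\<^sub>v v = 0\<^sub>v (Suc n)"
  shows "v = 0\<^sub>v (Suc n)"
proof -
  have E: "sg n r * v $ r + v $ (n - r) = 0" if r: "r \<le> n" for r
  proof -
    have ent: "Tm n $$ (r,k) = (if k = r then sg n r * 2 powr ((real n - real r)/2) else 0) + (if k = n - r then 2 powr (real (n-r)/2) else 0)" if k: "k < Suc n" for k
      using k r by (auto simp: Tm_def)
    have mi: "\<And>P a x. (if P then a else 0) * (x::real) = (if P then a * x else 0)" by simp
    have "(Tm n *\<^sub>v v) $ r = (\<Sum>k\<in>{0..<Suc n}. Tm n $$ (r,k) * v $ k)"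
      using r v by (simp add: scalar_prod_def row_def)
    also have "\<dots> = (\<Sum>k\<in>{0..<Suc n}. (if k = r then sg n r * 2 powr ((real n - real r)/2) * v $ k else 0)
      + (if k = n - r then 2 powr (real (n-r)/2) * v $ k else 0))"
      by (rule sum.cong[OF refl]) (auto simp: ent algebra_simps)
    also have "\<dots> = (\<Sum>k\<in>{0..<Suc n}. (if k = r then sg n r * 2 powr ((real n - real r)/2) * v $ k else 0))
      + (\<Sum>k\<in>{0..<Suc n}. (if k = n - r then 2 powr (real (n-r)/2) * v $ k else 0))"
      by (rule sum.distrib)
    also have "\<dots> = sg n r * 2 powr ((real n - real r)/2) * v $ r + 2 powr (real (n-r)/2) * v $ (n - r)"
      unfolding sum.delta using r by (cases "r = 0") auto
    also have "\<dots> = 2 powr ((real n - real r)/2) * (sg n r * v $ r + v $ (n - r))"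
      using r by (simp add: of_nat_diff algebra_simps)
    finally have "2 powr ((real n - real r)/2) * (sg n r * v $ r + v $ (n - r)) = 0"
      using T r by simp
    thus ?thesis by simp
  qed
  show ?thesis
  proof (rule eq_vecI)
    fix r assume "r < dim_vec (0\<^sub>v (Suc n))"
    hence r: "r \<le> n" by simp
    have e1: "sg n r * v $ r + v $ (n - r) = 0" by (rule E[OF r])
    have e2: "sg n (n-r) * v $ (n-r) + v $ r = 0" using E[of "n-r"] r by simp
    show "v $ r = 0\<^sub>v (Suc n) $ r"
    proof (cases "2*r = n")
      case True
      hence "n - r = r" by simp
      thus ?thesis using e1 r True by (simp add: sg_def)
    next
      case False
      thus ?thesis using e1 e2 r by (auto simp: sg_def split: if_splits)
    qed
  qed (use v in auto)
qed

lemma det_Pm: "det (Pm n) \<noteq> 0"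
proof -
  have "det (Tm n) \<noteq> 0"
    using Tm_kernel[of _ n] det_0_iff_vec_prod_zero[OF Tm_carrier[of n]] by blast
  thus ?thesis unfolding PBT by (simp add: det_mult[OF Bm_carrier Tm_carrier] det_Bm)
qed

lemma similar_KD: "similar_mat_wit (krawtchouk_real n) (Dm n) (Pm n) (SOME Q. Q \<in> carrier_mat (Suc n) (Suc n) \<and> Q * Pm n = 1\<^sub>m (Suc n) \<and> Pm n * Q = 1\<^sub>m (Suc n))"
proof -
  from det_non_zero_imp_unit[OF Pm_carrier det_Pm, unfolded Units_def]
  have "\<exists>Q. Q \<in> carrier_mat (Suc n) (Suc n) \<and> Q * Pm n = 1\<^sub>m (Suc n) \<and> Pm n * Q = 1\<^sub>m (Suc n)"
    by (auto simp: ring_mat_def)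
  from someI_ex[OF this] obtain Q where Qd: "Q = (SOME Q. Q \<in> carrier_mat (Suc n) (Suc n) \<and> Q * Pm n = 1\<^sub>m (Suc n) \<and> Pm n * Q = 1\<^sub>m (Suc n))"
    and Q: "Q \<in> carrier_mat (Suc n) (Suc n)" "Q * Pm n = 1\<^sub>m (Suc n)" "Pm n * Q = 1\<^sub>m (Suc n)" by auto
  have K: "krawtchouk_real n \<in> carrier_mat (Suc n) (Suc n)" by (rule K_carrier)
  have "krawtchouk_real n = krawtchouk_real n * (Pm n * Q)" using Q K by simp
  also have "\<dots> = (krawtchouk_real n * Pm n) * Q" by (rule assoc_mult_mat[OF K Pm_carrier Q(1), symmetric])
  also have "\<dots> = Pm n * Dm n * Q" by (simp add: KP)
  finally have "krawtchouk_real n = Pm n * Dm n * Q" .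
  thus ?thesis unfolding Qd[symmetric] similar_mat_wit_def Let_def using Q K by auto
qed

lemma jordan_matrix_diag: "jordan_matrix (map (\<lambda>x. (1, x)) xs) = mat (length xs) (length xs) (\<lambda>(i,j). if i = j then xs ! i else 0)"
proof (induct xs)
  case Nil thus ?case by (auto simp: jordan_matrix_def)
next
  case (Cons x xs)
  have s: "sum_list (map fst (map (\<lambda>x. (1::nat, x)) xs)) = length xs" by (induct xs) auto
  show ?case unfolding list.map jordan_matrix_Cons Cons s
    by (rule eq_matI) (auto simp: nth_Cons')
qed

lemma Dm_jordan: "Dm n = jordan_matrix (map (\<lambda>k. (1, dd n k)) [0..<Suc n])"
proof -
  have eq: "map (\<lambda>k. (1::nat, dd n k)) [0..<Suc n] = map (\<lambda>x. (1, x)) (map (dd n) [0..<Suc n])" by simp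
  show ?thesis unfolding eq jordan_matrix_diag by (auto simp: Dm_def simp del: upt_Suc)
qed

lemma jnf: "jordan_nf (krawtchouk_real n) (map (\<lambda>k. (1, dd n k)) [0..<Suc n])"
  unfolding jordan_nf_def Dm_jordan[symmetric] similar_mat_def using similar_KD[of n] by auto


lemma cnt1: "sum_list (map fst (filter (\<lambda>na. snd na = a) (map (\<lambda>k. (1::nat, f k)) xs))) = length (filter (\<lambda>k. f k = a) xs)"
  by (induct xs) auto

lemma cnt2: "(\<Sum> m \<leftarrow> map fst [(m, e)\<leftarrow>map (\<lambda>k. (1::nat, f k)) xs . e = a]. min 1 m) = length (filter (\<lambda>k. f k = a) xs)"
  by (induct xs) auto

lemma lam_pos: "lam n > 0" by (simp add: lam_def)

lemma cnt_plus: "length (filter (\<lambda>k. dd n k = lam n) [0..<Suc n]) = n div 2 + 1"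
proof -
  have "{i. i < length [0..<Suc n] \<and> dd n ([0..<Suc n] ! i) = lam n} = {..n div 2}"
    using lam_pos[of n] by (auto simp: dd_def sg_def simp del: upt_Suc)
  thus ?thesis unfolding length_filter_conv_card by (simp del: upt_Suc)
qed

lemma cnt_minus: "length (filter (\<lambda>k. dd n k = - lam n) [0..<Suc n]) = (n + 1) div 2"
proof -
  have "{i. i < length [0..<Suc n] \<and> dd n ([0..<Suc n] ! i) = - lam n} = {n div 2 + 1..<Suc n}"
    using lam_pos[of n] by (auto simp: dd_def sg_def simp del: upt_Suc)
  thus ?thesis unfolding length_filter_conv_card by (simp del: upt_Suc)
qed

lemma colv_image: "colv n ` {0..<Suc n} = vplus n ` {k. 2 * k \<le> n} \<union> vminus n ` {k. 2 * k < n}"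
proof
  show "colv n ` {0..<Suc n} \<subseteq> vplus n ` {k. 2 * k \<le> n} \<union> vminus n ` {k. 2 * k < n}"
    by (auto simp: colv_def)
  show "vplus n ` {k. 2 * k \<le> n} \<union> vminus n ` {k. 2 * k < n} \<subseteq> colv n ` {0..<Suc n}"
  proof
    fix x assume "x \<in> vplus n ` {k. 2 * k \<le> n} \<union> vminus n ` {k. 2 * k < n}"
    then consider k where "2*k \<le> n" "x = vplus n k" | k where "2*k < n" "x = vminus n k" by auto
    thus "x \<in> colv n ` {0..<Suc n}"
    proof cases
      case (1 k) thus ?thesis by (auto simp: colv_def intro!: image_eqI[of _ _ k])
    next
      case (2 k)
      have "colv n (n-k) = x" using 2 by (auto simp: colv_def)
      thus ?thesis by auto
    qed
  qed
qed

lemma cols_Pm: "set (cols (Pm n)) = colv n ` {0..<Suc n}"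
  unfolding cols_def by (auto simp: col_Pm simp del: upt_Suc)

lemma distinct_cols: "distinct (cols (Pm n))"
proof -
  have "col (Pm n) i \<noteq> col (Pm n) j" if "i < Suc n" "j < Suc n" "i \<noteq> j" for i j
    using det_identical_columns[OF Pm_carrier that(3) that(1) that(2)] det_Pm[of n] by auto
  thus ?thesis by (auto simp: distinct_conv_nth)
qed

lemma basis_cols: "vectorspace.basis class_ring (module_vec TYPE(real) (Suc n)) (set (cols (Pm n)))"
proof -
  interpret vec_space "TYPE(real)" "Suc n" .
  have li: "lin_indpt (set (cols (Pm n)))"
    using lin_dep_cols_imp_det_0[OF Pm_carrier] det_Pm[of n] by auto
  have card: "card (set (cols (Pm n))) = Suc n"
    using distinct_card[OF distinct_cols[of n]] by simp
  have sub: "set (cols (Pm n)) \<subseteq> carrier_vec (Suc n)"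
    unfolding cols_Pm by auto
  show ?thesis
    by (rule dim_li_is_basis[OF fin_dim finite_set _ li]) (use sub card dim_is_n in auto)
qed

theorem mainTheorem13:
  fixes n :: nat
  defines "K \<equiv> krawtchouk_real n"
    and "S \<equiv> vplus n ` {k. 2 * k \<le> n} \<union> vminus n ` {k. 2 * k < n}"
  shows "(\<forall>k \<le> n. K *\<^sub>v vplus n k = (2 powr (real n / 2)) \<cdot>\<^sub>v vplus n k
                 \<and> K *\<^sub>v vminus n k = (- (2 powr (real n / 2))) \<cdot>\<^sub>v vminus n k)
    \<and> card S = n + 1
    \<and> vectorspace.basis class_ring (module_vec TYPE(real) (n + 1)) S
    \<and> (\<exists>P Q D. similar_mat_wit K D P Q \<and> diagonal_mat D)
    \<and> Polynomial.order (2 powr (real n / 2)) (char_poly K) = n div 2 + 1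
    \<and> Polynomial.order (- (2 powr (real n / 2))) (char_poly K) = (n + 1) div 2
    \<and> dim_gen_eigenspace K (2 powr (real n / 2)) 1 = n div 2 + 1
    \<and> dim_gen_eigenspace K (- (2 powr (real n / 2))) 1 = (n + 1) div 2"
proof -
  have SP: "S = set (cols (Pm n))" unfolding S_def cols_Pm colv_image ..
  have L: "2 powr (real n / 2) = lam n" by (simp add: lam_def)
  have jn: "jordan_nf K (map (\<lambda>k. (1, dd n k)) [0..<Suc n])" unfolding K_def by (rule jnf)
  have diag: "diagonal_mat (Dm n)" by (simp add: diagonal_mat_def Dm_def)
  show ?thesis unfolding L
  proof (intro conjI allI impI)
    fix k assume "k \<le> n"
    thus "K *\<^sub>v vplus n k = lam n \<cdot>\<^sub>v vplus n k" "K *\<^sub>v vminus n k = (- lam n) \<cdot>\<^sub>v vminus n k"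
      unfolding K_def by (simp_all add: eig_plus eig_minus)
  next
    show "card S = n + 1" unfolding SP using distinct_card[OF distinct_cols[of n]] by simp
  next
    show "vectorspace.basis class_ring (module_vec TYPE(real) (n + 1)) S"
      unfolding SP using basis_cols[of n] by simp
  next
    show "\<exists>P Q D. similar_mat_wit K D P Q \<and> diagonal_mat D"
      unfolding K_def using similar_KD[of n] diag by blast
  next
    show "Polynomial.order (lam n) (char_poly K) = n div 2 + 1"
      unfolding jordan_nf_order[OF jn] cnt1 cnt_plus ..
    show "Polynomial.order (- lam n) (char_poly K) = (n + 1) div 2"
      unfolding jordan_nf_order[OF jn] cnt1 cnt_minus ..
    show "dim_gen_eigenspace K (lam n) 1 = n div 2 + 1"
      unfolding dim_gen_eigenspace[OF jn] cnt2 cnt_plus ..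
    show "dim_gen_eigenspace K (- lam n) 1 = (n + 1) div 2"
      unfolding dim_gen_eigenspace[OF jn] cnt2 cnt_minus ..
  qed
qed

end
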